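(* Let $T$ be a tree. Then for every dominating set $S$ of $T$, $|a(S)|\ge 2\gamma(T)-|S|$.
   Context: A dominating set of a graph $G=(V,E)$ is a set $S\subseteq V$ such that every vertex is in $S$ or adjacent to a vertex of $S$. $\gamma(T)$ denotes the domination number (minimum size of a dominating set). For a dominating set $S$, $a(S)=\{v\in S: S\setminus\{v\}\text{ is not a dominating set}\}$ is the set of critical vertices of $S$. *)

theory Defs
  imports Main
begin

definition simple_graph :: "'a set \<Rightarrow> ('a \<Rightarrow> 'a \<Rightarrow> bool) \<Rightarrow> bool" where
  "simple_graph V E \<longleftrightarrow> finite V \<and> (\<forall>u v. E u v \<longrightarrow> E v u)
     \<and> (\<forall>v. \<not> E v v) \<and> (\<forall>u v. E u v \<longrightarrow> u \<in> V \<and> v \<in> V)"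

definition is_walk :: "('a \<Rightarrow> 'a \<Rightarrow> bool) \<Rightarrow> 'a list \<Rightarrow> bool" where
  "is_walk E xs \<longleftrightarrow> xs \<noteq> [] \<and> (\<forall>i. Suc i < length xs \<longrightarrow> E (xs ! i) (xs ! Suc i))"

definition connected_graph :: "'a set \<Rightarrow> ('a \<Rightarrow> 'a \<Rightarrow> bool) \<Rightarrow> bool" where
  "connected_graph V E \<longleftrightarrow> V \<noteq> {} \<and>
     (\<forall>u\<in>V. \<forall>v\<in>V. \<exists>xs. is_walk E xs \<and> hd xs = u \<and> last xs = v)"

definition is_cycle :: "('a \<Rightarrow> 'a \<Rightarrow> bool) \<Rightarrow> 'a list \<Rightarrow> bool" where
  "is_cycle E xs \<longleftrightarrow> length xs \<ge> 3 \<and> distinct xs \<and> is_walk E xs \<and> E (last xs) (hd xs)"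

definition tree :: "'a set \<Rightarrow> ('a \<Rightarrow> 'a \<Rightarrow> bool) \<Rightarrow> bool" where
  "tree V E \<longleftrightarrow> simple_graph V E \<and> connected_graph V E \<and> (\<nexists>xs. is_cycle E xs)"

definition dominating_set :: "'a set \<Rightarrow> ('a \<Rightarrow> 'a \<Rightarrow> bool) \<Rightarrow> 'a set \<Rightarrow> bool" where
  "dominating_set V E S \<longleftrightarrow> S \<subseteq> V \<and> (\<forall>v\<in>V. v \<in> S \<or> (\<exists>u\<in>S. E v u))"

definition domination_number :: "'a set \<Rightarrow> ('a \<Rightarrow> 'a \<Rightarrow> bool) \<Rightarrow> nat" where
  "domination_number V E = (LEAST k. \<exists>S. dominating_set V E S \<and> card S = k)"

definition critical_vertices :: "'a set \<Rightarrow> ('a \<Rightarrow> 'a \<Rightarrow> bool) \<Rightarrow> 'a set \<Rightarrow> 'a set" where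
  "critical_vertices V E S = {v\<in>S. \<not> dominating_set V E (S - {v})}"

end

theory Submission
  imports Defs
begin

lemma walk_snoc: "is_walk E xs \<Longrightarrow> E (last xs) a \<Longrightarrow> is_walk E (xs @ [a])"
  unfolding is_walk_def
proof (intro conjI allI impI)
  fix i assume w: "xs \<noteq> [] \<and> (\<forall>i. Suc i < length xs \<longrightarrow> E (xs ! i) (xs ! Suc i))"
    and e: "E (last xs) a" and i: "Suc i < length (xs @ [a])"
  show "E ((xs @ [a]) ! i) ((xs @ [a]) ! Suc i)"
  proof (cases "Suc i < length xs")
    case True then show ?thesis using w by (simp add: nth_append)
  next
    case False
    then have si: "Suc i = length xs" using i by simp
    then have "i = length xs - 1" by simp
    then show ?thesis using e w si by (simp add: nth_append last_conv_nth)
  qed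
qed simp

lemma walk_drop: "is_walk E xs \<Longrightarrow> i < length xs \<Longrightarrow> is_walk E (drop i xs)"
  unfolding is_walk_def by auto

lemma cycle_mono: "(\<forall>a b. E' a b \<longrightarrow> E a b) \<Longrightarrow> is_cycle E' xs \<Longrightarrow> is_cycle E xs"
  unfolding is_cycle_def is_walk_def by blast

lemma leaf_exists:
  assumes fin: "finite V" and sub: "\<forall>u v. E u v \<longrightarrow> u \<in> V \<and> v \<in> V"
    and irr: "\<forall>v. \<not> E v v" and nc: "\<nexists>xs. is_cycle E xs" and ne: "V \<noteq> {}"
  shows "\<exists>v\<in>V. \<forall>a b. E v a \<longrightarrow> E v b \<longrightarrow> a = b"
proof -
  obtain v0 where v0: "v0 \<in> V" using ne by auto
  define P where "P = (\<lambda>xs. is_walk E xs \<and> distinct xs \<and> set xs \<subseteq> V)"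
  have P0: "P [v0]" using v0 unfolding P_def is_walk_def by auto
  have bnd: "\<forall>ys. P ys \<longrightarrow> length ys < card V + 1"
  proof (intro allI impI)
    fix ys assume "P ys"
    then have "card (set ys) \<le> card V" "card (set ys) = length ys"
      using fin card_mono distinct_card unfolding P_def by blast+
    then show "length ys < card V + 1" by simp
  qed
  obtain xs where Pxs: "P xs" and mx: "\<forall>ys. P ys \<longrightarrow> length ys \<le> length xs"
    using ex_has_greatest_nat[OF P0 bnd] by blast
  have wx: "is_walk E xs" and dx: "distinct xs" and sx: "set xs \<subseteq> V" using Pxs P_def by auto
  have nex: "xs \<noteq> []" using wx is_walk_def by auto
  define v where "v = last xs"
  have vV: "v \<in> V" using nex sx v_def by auto
  have key: "length xs \<ge> 2 \<and> a = xs ! (length xs - 2)" if ea: "E v a" for a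
  proof (cases "a \<in> set xs")
    case False
    have "P (xs @ [a])" using walk_snoc[OF wx] ea v_def False dx sx sub unfolding P_def by auto
    then have "length (xs @ [a]) \<le> length xs" using mx by blast
    then show ?thesis by simp
  next
    case True
    then obtain i where i: "i < length xs" "xs ! i = a" by (auto simp: in_set_conv_nth)
    have "i \<noteq> length xs - 1" using irr ea i v_def nex by (metis last_conv_nth)
    then have i2: "i + 2 \<le> length xs" using i by linarith
    show ?thesis
    proof (cases "i = length xs - 2")
      case True then show ?thesis using i i2 by simp
    next
      case False
      then have i3: "i + 3 \<le> length xs" using i2 by linarith
      have "is_cycle E (drop i xs)"
        unfolding is_cycle_def using i i3 dx walk_drop[OF wx i(1)] ea v_def
        by (simp add: hd_drop_conv_nth)
      then show ?thesis using nc by blast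
    qed
  qed
  show ?thesis
  proof (intro bexI[OF _ vV] allI impI)
    fix a b assume "E v a" "E v b"
    then show "a = b" using key by metis
  qed
qed

lemma coloring:
  "finite V \<Longrightarrow> \<forall>u v. E u v \<longrightarrow> E v u \<Longrightarrow> \<forall>v. \<not> E v v \<Longrightarrow>
   \<forall>u v. E u v \<longrightarrow> u \<in> V \<and> v \<in> V \<Longrightarrow> \<nexists>xs. is_cycle E xs \<Longrightarrow>
   \<exists>col::'a \<Rightarrow> bool. (\<forall>b b'. b \<in> B \<longrightarrow> b' \<in> B \<longrightarrow> E b b' \<longrightarrow> col b \<noteq> col b') \<and>
     (\<forall>x b1 b2. x \<notin> B \<longrightarrow> b1 \<noteq> b2 \<longrightarrow> b1 \<in> B \<longrightarrow> b2 \<in> B \<longrightarrow> E x b1 \<longrightarrow> E x b2 \<longrightarrow>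
        (\<exists>c1 c2. c1 \<in> B \<and> c2 \<in> B \<and> E x c1 \<and> E x c2 \<and> col c1 \<noteq> col c2))"
proof (induction "card V" arbitrary: V E rule: less_induct)
  case less
  note fin = less.prems(1) and sym = less.prems(2) and irr = less.prems(3)
    and sub = less.prems(4) and nc = less.prems(5)
  have symr: "E b a" if "E a b" for a b using sym that by blast
  show ?case
  proof (cases "V = {}")
    case True
    then show ?thesis using sub by auto
  next
    case False
    obtain v where vV: "v \<in> V" and leaf: "\<forall>a b. E v a \<longrightarrow> E v b \<longrightarrow> a = b"
      using leaf_exists[OF fin sub irr nc False] by blast
    have leafr: "a = b" if "E v a" "E v b" for a b using leaf that by blast
    define V' where "V' = V - {v}"
    define E' where "E' = (\<lambda>a b. E a b \<and> a \<noteq> v \<and> b \<noteq> v)"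
    have lt: "card V' < card V" unfolding V'_def using fin vV by (rule card_Diff1_less)
    have nc': "\<nexists>xs. is_cycle E' xs" using nc cycle_mono[of E' E] E'_def by blast
    have fin': "finite V'" using fin V'_def by simp
    have sym': "\<forall>a b. E' a b \<longrightarrow> E' b a" unfolding E'_def using symr by blast
    have irr': "\<forall>a. \<not> E' a a" unfolding E'_def using irr by blast
    have sub': "\<forall>a b. E' a b \<longrightarrow> a \<in> V' \<and> b \<in> V'" unfolding E'_def V'_def using sub by blast
    obtain col' :: "'a \<Rightarrow> bool" where cc: "(\<forall>b b'. b \<in> B \<longrightarrow> b' \<in> B \<longrightarrow> E' b b' \<longrightarrow> col' b \<noteq> col' b') \<and>
      (\<forall>x b1 b2. x \<notin> B \<longrightarrow> b1 \<noteq> b2 \<longrightarrow> b1 \<in> B \<longrightarrow> b2 \<in> B \<longrightarrow> E' x b1 \<longrightarrow> E' x b2 \<longrightarrow>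
        (\<exists>c1 c2. c1 \<in> B \<and> c2 \<in> B \<and> E' x c1 \<and> E' x c2 \<and> col' c1 \<noteq> col' c2))"
      using less.hyps[OF lt fin' sym' irr' sub' nc'] by (rule exE)
    note c1 = conjunct1[OF cc] and c2 = conjunct2[OF cc]
    have c1r: "col' b \<noteq> col' b'" if "b \<in> B" "b' \<in> B" "E b b'" "b \<noteq> v" "b' \<noteq> v" for b b'
      using c1 that unfolding E'_def by blast
    have c2r: "\<exists>c1 c2. c1 \<in> B \<and> c2 \<in> B \<and> E x c1 \<and> E x c2 \<and> c1 \<noteq> v \<and> c2 \<noteq> v \<and> col' c1 \<noteq> col' c2"
      if H: "x \<notin> B" "b1 \<noteq> b2" "b1 \<in> B" "b2 \<in> B" "E x b1" "E x b2" "x \<noteq> v" "b1 \<noteq> v" "b2 \<noteq> v" for x b1 b2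
    proof -
      have "E' x b1" "E' x b2" using H unfolding E'_def by auto
      then obtain c1 c2 where "c1 \<in> B \<and> c2 \<in> B \<and> E' x c1 \<and> E' x c2 \<and> col' c1 \<noteq> col' c2"
        using c2 H by blast
      then show ?thesis unfolding E'_def by blast
    qed
    have xnv: "x \<noteq> v" if "b1 \<noteq> b2" "E x b1" "E x b2" for x b1 b2
      using leafr that by blast
    show ?thesis
    proof (cases "\<exists>u. E v u \<and> v \<in> B \<and> u \<in> B")
      case True
      then obtain u where u: "E v u" "v \<in> B" "u \<in> B" by blast
      have uv: "u \<noteq> v" using u irr by blast
      let ?col = "col'(v := \<not> col' u)"
      show ?thesis
      proof (intro exI[of _ ?col] conjI allI impI)
        fix b b' assume h: "b \<in> B" "b' \<in> B" "E b b'"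
        show "?col b \<noteq> ?col b'"
        proof (cases "b = v")
          case True
          then have "b' = u" using leafr[OF _ u(1)] h by blast
          then show ?thesis using True uv by simp
        next
          case bF: False
          show ?thesis
          proof (cases "b' = v")
            case True
            then have "b = u" using leafr[OF _ u(1)] symr h by blast
            then show ?thesis using True uv by simp
          next
            case False
            then show ?thesis using bF c1r h by simp
          qed
        qed
      next
        fix x b1 b2 assume h: "x \<notin> B" "b1 \<noteq> b2" "b1 \<in> B" "b2 \<in> B" "E x b1" "E x b2"
        have xv: "x \<noteq> v" using xnv h by blast
        have xu: "x \<noteq> u" using h u by blast
        have "b1 \<noteq> v" "b2 \<noteq> v" using h xu leafr[OF u(1)] symr by blast+
        then obtain c1 c2 where "c1 \<in> B \<and> c2 \<in> B \<and> E x c1 \<and> E x c2 \<and> c1 \<noteq> v \<and> c2 \<noteq> v \<and> col' c1 \<noteq> col' c2"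
          using c2r h xv by blast
        then show "\<exists>c1 c2. c1 \<in> B \<and> c2 \<in> B \<and> E x c1 \<and> E x c2 \<and> ?col c1 \<noteq> ?col c2"
          by auto
      qed
    next
      case F1: False
      show ?thesis
      proof (cases "\<exists>u w. E v u \<and> v \<in> B \<and> u \<notin> B \<and> w \<in> B \<and> w \<noteq> v \<and> E u w")
        case True
        then obtain u w where u: "E v u" "v \<in> B" "u \<notin> B" "w \<in> B" "w \<noteq> v" "E u w" by blast
        let ?col = "col'(v := \<not> col' w)"
        show ?thesis
        proof (intro exI[of _ ?col] conjI allI impI)
          fix b b' assume h: "b \<in> B" "b' \<in> B" "E b b'"
          have "b \<noteq> v" using h F1 by blast
          moreover have "b' \<noteq> v" using h F1 symr by blast
          ultimately show "?col b \<noteq> ?col b'" using c1r h by simp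
        next
          fix x b1 b2 assume h: "x \<notin> B" "b1 \<noteq> b2" "b1 \<in> B" "b2 \<in> B" "E x b1" "E x b2"
          show "\<exists>c1 c2. c1 \<in> B \<and> c2 \<in> B \<and> E x c1 \<and> E x c2 \<and> ?col c1 \<noteq> ?col c2"
          proof (cases "x = u")
            case True
            then show ?thesis using u symr by (intro exI[of _ v] exI[of _ w]) auto
          next
            case False
            have xv: "x \<noteq> v" using xnv h by blast
            have "b1 \<noteq> v" "b2 \<noteq> v" using h False leafr[OF u(1)] symr by blast+
            then obtain c1 c2 where "c1 \<in> B \<and> c2 \<in> B \<and> E x c1 \<and> E x c2 \<and> c1 \<noteq> v \<and> c2 \<noteq> v \<and> col' c1 \<noteq> col' c2"
              using c2r h xv by blast
            then show ?thesis by auto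
          qed
        qed
      next
        case F2: False
        show ?thesis
        proof (intro exI[of _ col'] conjI allI impI)
          fix b b' assume h: "b \<in> B" "b' \<in> B" "E b b'"
          have "b \<noteq> v" using h F1 by blast
          moreover have "b' \<noteq> v" using h F1 symr by blast
          ultimately show "col' b \<noteq> col' b'" using c1r h by simp
        next
          fix x b1 b2 assume h: "x \<notin> B" "b1 \<noteq> b2" "b1 \<in> B" "b2 \<in> B" "E x b1" "E x b2"
          have xv: "x \<noteq> v" using xnv h by blast
          have "b1 \<noteq> v \<and> b2 \<noteq> v"
          proof (rule ccontr)
            assume a: "\<not> (b1 \<noteq> v \<and> b2 \<noteq> v)"
            show False
            proof (cases "b1 = v")
              case True
              then have "E v x" "b2 \<noteq> v" "E x b2" using h symr by auto
              then show False using F2 h True by blast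
            next
              case False
              then have "b2 = v" using a by blast
              then have "E v x" "b1 \<noteq> v" "E x b1" using h symr False by auto
              then show False using F2 h \<open>b2 = v\<close> by blast
            qed
          qed
          then obtain c1 c2 where "c1 \<in> B \<and> c2 \<in> B \<and> E x c1 \<and> E x c2 \<and> c1 \<noteq> v \<and> c2 \<noteq> v \<and> col' c1 \<noteq> col' c2"
            using c2r h xv by blast
          then show "\<exists>c1 c2. c1 \<in> B \<and> c2 \<in> B \<and> E x c1 \<and> E x c2 \<and> col' c1 \<noteq> col' c2"
            by blast
        qed
      qed
    qed
  qed
qed

theorem lemma3p4:
  fixes V :: "'a set" and E :: "'a \<Rightarrow> 'a \<Rightarrow> bool" and S :: "'a set"
  assumes "tree V E"
    and "dominating_set V E S"
  shows "int (card (critical_vertices V E S)) \<ge> 2 * int (domination_number V E) - int (card S)"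
proof -
  have sg: "simple_graph V E" and nc: "\<nexists>xs. is_cycle E xs" using assms(1) unfolding tree_def by auto
  have fin: "finite V" and sym: "\<forall>u v. E u v \<longrightarrow> E v u" and irr: "\<forall>v. \<not> E v v"
    and sub: "\<forall>u v. E u v \<longrightarrow> u \<in> V \<and> v \<in> V" using sg unfolding simple_graph_def by auto
  have SV: "S \<subseteq> V" and domS: "\<forall>v\<in>V. v \<in> S \<or> (\<exists>u\<in>S. E v u)"
    using assms(2) unfolding dominating_set_def by auto
  have finS: "finite S" using fin SV finite_subset by blast
  define A where "A = critical_vertices V E S"
  define B where "B = S - A"
  have AS: "A \<subseteq> S" unfolding A_def critical_vertices_def by auto
  have redund: "\<forall>v\<in>V. v \<in> S - {b} \<or> (\<exists>u\<in>S - {b}. E v u)" if "b \<in> B" for b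
  proof -
    have "dominating_set V E (S - {b})" using that unfolding B_def A_def critical_vertices_def by auto
    then show ?thesis unfolding dominating_set_def by blast
  qed
  obtain col :: "'a \<Rightarrow> bool" where c1: "\<forall>b b'. b \<in> B \<longrightarrow> b' \<in> B \<longrightarrow> E b b' \<longrightarrow> col b \<noteq> col b'"
    and c2: "\<forall>x b1 b2. x \<notin> B \<longrightarrow> b1 \<noteq> b2 \<longrightarrow> b1 \<in> B \<longrightarrow> b2 \<in> B \<longrightarrow> E x b1 \<longrightarrow> E x b2 \<longrightarrow>
        (\<exists>c1 c2. c1 \<in> B \<and> c2 \<in> B \<and> E x c1 \<and> E x c2 \<and> col c1 \<noteq> col c2)"
    using coloring[OF fin sym irr sub nc, of B] by blast
  have domK: "dominating_set V E (A \<union> {b\<in>B. col b = c})" for c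
    unfolding dominating_set_def
  proof (intro conjI ballI)
    show "A \<union> {b\<in>B. col b = c} \<subseteq> V" using AS SV B_def by auto
  next
    fix v assume vV: "v \<in> V"
    show "v \<in> A \<union> {b\<in>B. col b = c} \<or> (\<exists>u\<in>A \<union> {b\<in>B. col b = c}. E v u)"
    proof (cases "v \<in> S")
      case True
      show ?thesis
      proof (cases "v \<in> A \<union> {b\<in>B. col b = c}")
        case False
        then have vB: "v \<in> B" "col v \<noteq> c" using True B_def by auto
        then obtain u where u: "u \<in> S - {v}" "E v u" using redund[OF vB(1)] vV by blast
        show ?thesis
        proof (cases "u \<in> A")
          case True then show ?thesis using u by blast
        next
          case False
          then have "u \<in> B" using u B_def by auto
          then have "col u = c" using c1 vB u by blast
          then show ?thesis using u \<open>u \<in> B\<close> by blast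
        qed
      qed simp
    next
      case vS: False
      obtain u where u: "u \<in> S" "E v u" using domS vV vS by blast
      show ?thesis
      proof (cases "u \<in> A")
        case True then show ?thesis using u by blast
      next
        case False
        then have uB: "u \<in> B" using u B_def by auto
        obtain u2 where u2: "u2 \<in> S - {u}" "E v u2" using redund[OF uB] vV vS by blast
        show ?thesis
        proof (cases "u2 \<in> A")
          case True then show ?thesis using u2 by blast
        next
          case False
          then have u2B: "u2 \<in> B" using u2 B_def by auto
          have "v \<notin> B" using vS B_def by auto
          then obtain d1 d2 where d: "d1 \<in> B" "d2 \<in> B" "E v d1" "E v d2" "col d1 \<noteq> col d2"
            using c2 uB u2B u u2 by blast
          then show ?thesis by (cases "col d1 = c") auto
        qed
      qed
    qed
  qed
  have gle: "domination_number V E \<le> card (A \<union> {b\<in>B. col b = c})" for c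
    unfolding domination_number_def using domK[of c] by (intro Least_le) blast
  have finA: "finite A" using finS AS finite_subset by blast
  have finB: "finite B" using finS B_def by simp
  have cK: "card (A \<union> {b\<in>B. col b = c}) = card A + card {b\<in>B. col b = c}" for c
    using finA finB B_def by (intro card_Un_disjoint) auto
  have cB: "card B = card {b\<in>B. col b = True} + card {b\<in>B. col b = False}"
  proof -
    have "B = {b\<in>B. col b = True} \<union> {b\<in>B. col b = False}" by auto
    then have "card B = card ({b\<in>B. col b = True} \<union> {b\<in>B. col b = False})" by simp
    also have "\<dots> = card {b\<in>B. col b = True} + card {b\<in>B. col b = False}"
      using finB by (intro card_Un_disjoint) auto
    finally show ?thesis .
  qed
  have cS: "card S = card A + card B"
  proof -
    have "S = A \<union> B" using AS B_def by auto
    then have "card S = card (A \<union> B)" by simp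
    also have "\<dots> = card A + card B" using finA finB B_def by (intro card_Un_disjoint) auto
    finally show ?thesis .
  qed
  have "2 * domination_number V E \<le> card A + card S"
    using gle[of True] gle[of False] cK[of True] cK[of False] cB cS by linarith
  then show ?thesis unfolding A_def by linarith
qed

end
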